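(* Let $n\ge 1$, $\nu\ge 1$ be integers and $\delta\in\{0,1,2\}$. If $[a_1,a_2,\ldots,a_{2\nu+\delta}]$ is a vertex of the orthogonal graph $\mathcal{O}^{(2\nu+\delta)}_{2^n}$, then $a_i\in\mathbb{Z}_{2^n}^\times$ for some $i\in\{1,2,\ldots,2\nu\}$.
   Context: Let $V^{2\nu+\delta}$ be the set of tuples $\vec a=(a_1,\ldots,a_{2\nu+\delta})\in(\mathbb{Z}_{2^n})^{2\nu+\delta}$ such that some $a_i$ is a unit of $\mathbb{Z}_{2^n}$. Write $\vec a\sim\vec b$ if $\vec a=\lambda\vec b$ for some $\lambda\in\mathbb{Z}_{2^n}^\times$, let $[\vec a]=[a_1,\ldots,a_{2\nu+\delta}]$ denote the equivalence class and $V^{2\nu+\delta}_\sim$ the set of classes. Let $G_{2\nu+\delta,\Delta}$ be the $(2\nu+\delta)\times(2\nu+\delta)$ block-diagonal-type matrix over $\mathbb{Z}_{2^n}$ given by $\begin{pmatrix}0&I_\nu&\\ &0&\\ &&\Delta\end{pmatrix}$ (the first two block rows/columns of size $\nu$, all unspecified blocks zero), where $\Delta$ is empty if $\delta=0$, $\Delta=(1)$ if $\delta=1$, and $\Delta=\begin{pmatrix}z&1\\0&z\end{pmatrix}$ if $\delta=2$, with $z$ a fixed unit of $\mathbb{Z}_{2^n}$ (equivalently, $z\notin\{x^2+x:x\in\mathbb{Z}_{2^n}\}$). The orthogonal graph $\mathcal{O}^{(2\nu+\delta)}_{2^n}$ has vertex set $\{[\vec a]\in V^{2\nu+\delta}_\sim:\vec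 a\,G_{2\nu+\delta,\Delta}\,\vec a^t=0\}$, and $[\vec a]$ is adjacent to $[\vec b]$ iff $\vec a\,(G_{2\nu+\delta,\Delta}+G_{2\nu+\delta,\Delta}^t)\,\vec b^t\in\mathbb{Z}_{2^n}^\times$. *)

theory Defs
  imports Main
begin

text \<open>Elements of Z_(2^n) are represented by integers in {0..<2^n}.
  Tuples of length N are functions nat => int, indexed by 1..N, zero elsewhere.\<close>

definition unit_mod :: "int \<Rightarrow> int \<Rightarrow> bool" where
  "unit_mod m x \<longleftrightarrow> (\<exists>y. (x * y) mod m = 1 mod m)"

definition units_Z :: "nat \<Rightarrow> int set" where
  "units_Z n = {x \<in> {0..<2^n}. unit_mod (2^n) x}"

definition tuples :: "nat \<Rightarrow> nat \<Rightarrow> (nat \<Rightarrow> int) set" where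
  "tuples n N = {a. (\<forall>i\<in>{1..N}. a i \<in> {0..<2^n}) \<and> (\<forall>i. i \<notin> {1..N} \<longrightarrow> a i = 0)}"

definition Vset :: "nat \<Rightarrow> nat \<Rightarrow> (nat \<Rightarrow> int) set" where
  "Vset n N = {a \<in> tuples n N. \<exists>i\<in>{1..N}. a i \<in> units_Z n}"

definition scale :: "nat \<Rightarrow> int \<Rightarrow> (nat \<Rightarrow> int) \<Rightarrow> (nat \<Rightarrow> int)" where
  "scale n l a = (\<lambda>i. (l * a i) mod 2^n)"

definition cls :: "nat \<Rightarrow> nat \<Rightarrow> (nat \<Rightarrow> int) \<Rightarrow> (nat \<Rightarrow> int) set" where
  "cls n N a = {b \<in> Vset n N. \<exists>l\<in>units_Z n. a = scale n l b}"

definition Gmat :: "nat \<Rightarrow> nat \<Rightarrow> int \<Rightarrow> nat \<Rightarrow> nat \<Rightarrow> int" where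
  "Gmat \<nu> \<delta> z i j =
     (if 1 \<le> i \<and> i \<le> \<nu> \<and> j = i + \<nu> then 1
      else if \<delta> = 1 \<and> i = 2*\<nu>+1 \<and> j = 2*\<nu>+1 then 1
      else if \<delta> = 2 \<and> i = 2*\<nu>+1 \<and> j = 2*\<nu>+1 then z
      else if \<delta> = 2 \<and> i = 2*\<nu>+1 \<and> j = 2*\<nu>+2 then 1
      else if \<delta> = 2 \<and> i = 2*\<nu>+2 \<and> j = 2*\<nu>+2 then z
      else 0)"

definition bform :: "nat \<Rightarrow> nat \<Rightarrow> nat \<Rightarrow> int \<Rightarrow> (nat \<Rightarrow> int) \<Rightarrow> (nat \<Rightarrow> int) \<Rightarrow> int" where
  "bform n \<nu> \<delta> z a b =
     (\<Sum>i\<in>{1..2*\<nu>+\<delta>}. \<Sum>j\<in>{1..2*\<nu>+\<delta>}. a i * Gmat \<nu> \<delta> z i j * b j) mod 2^n"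

definition orth_vertices :: "nat \<Rightarrow> nat \<Rightarrow> nat \<Rightarrow> int \<Rightarrow> (nat \<Rightarrow> int) set set" where
  "orth_vertices n \<nu> \<delta> z =
     {cls n (2*\<nu>+\<delta>) a | a. a \<in> Vset n (2*\<nu>+\<delta>) \<and> bform n \<nu> \<delta> z a a = 0}"

end

theory Submission
  imports Defs
begin

lemma unit_iff_odd:
  fixes x :: int assumes "n \<ge> 1"
  shows "unit_mod (2^n) x \<longleftrightarrow> odd x"
proof
  assume "unit_mod (2^n) x"
  then obtain y where y: "(x*y) mod 2^n = 1 mod 2^n" unfolding unit_mod_def by blast
  have "(2::int) dvd 2^n" using assms by (simp add: dvd_power)
  have "(2::int)^n > 1" using assms by (simp add: one_less_power)
  then have "1 mod (2::int)^n = 1" using assms by simp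
  then have "odd ((x*y) mod 2^n)" using y by simp
  then have "odd (x*y)" using \<open>2 dvd 2^n\<close> by (metis dvd_mod_iff)
  then show "odd x" by simp
next
  assume "odd x"
  then have "coprime x (2^n)" by simp
  then have "gcd x (2^n) = 1" by simp
  then obtain u v where "u * x + v * 2^n = 1" using bezout_int[of x "2^n"] by auto
  then have "(x*u) mod 2^n = 1 mod 2^n"
    by (metis mod_mult_self1 mult.commute)
  then show "unit_mod (2^n) x" unfolding unit_mod_def by blast
qed


lemma row_low:
  assumes "1 \<le> i" "i \<le> \<nu>"
  shows "(\<Sum>j\<in>{1..2*\<nu>+\<delta>}. b i * Gmat \<nu> \<delta> z i j * b j) = b i * b (i+\<nu>)"
proof -
  have "\<And>j. b i * Gmat \<nu> \<delta> z i j * b j = (if j = i+\<nu> then b i * b j else 0)"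
    using assms by (simp add: Gmat_def)
  then have "(\<Sum>j\<in>{1..2*\<nu>+\<delta>}. b i * Gmat \<nu> \<delta> z i j * b j)
     = (\<Sum>j\<in>{1..2*\<nu>+\<delta>}. if j = i+\<nu> then b i * b j else 0)" by simp
  also have "\<dots> = b i * b (i+\<nu>)" using assms by (simp add: sum.delta')
  finally show ?thesis .
qed

lemma row_mid:
  assumes "\<nu> < i" "i \<le> 2*\<nu>"
  shows "(\<Sum>j\<in>{1..2*\<nu>+\<delta>}. b i * Gmat \<nu> \<delta> z i j * b j) = 0"
proof -
  have "\<And>j. Gmat \<nu> \<delta> z i j = 0"
    using assms by (simp add: Gmat_def)
  then show ?thesis by simp
qed

lemma total_split:
  "(\<Sum>i\<in>{1..2*\<nu>+\<delta>}. \<Sum>j\<in>{1..2*\<nu>+\<delta>}. b i * Gmat \<nu> \<delta> z i j * b j)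
   = (\<Sum>i\<in>{1..\<nu>}. b i * b (i+\<nu>)) +
     (\<Sum>i\<in>{2*\<nu>+1..2*\<nu>+\<delta>}. \<Sum>j\<in>{1..2*\<nu>+\<delta>}. b i * Gmat \<nu> \<delta> z i j * b j)"
proof -
  let ?r = "\<lambda>i. \<Sum>j\<in>{1..2*\<nu>+\<delta>}. b i * Gmat \<nu> \<delta> z i j * b j"
  have U: "{1..2*\<nu>+\<delta>} = {1..\<nu>} \<union> ({\<nu>+1..2*\<nu>} \<union> {2*\<nu>+1..2*\<nu>+\<delta>})" by auto
  have "sum ?r {1..2*\<nu>+\<delta>} = sum ?r {1..\<nu>} + (sum ?r {\<nu>+1..2*\<nu>} + sum ?r {2*\<nu>+1..2*\<nu>+\<delta>})"
    unfolding U by (subst sum.union_disjoint, auto, subst sum.union_disjoint, auto)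
  also have "sum ?r {\<nu>+1..2*\<nu>} = 0" by (rule sum.neutral, rule ballI, rule row_mid) auto
  also have "sum ?r {1..\<nu>} = (\<Sum>i\<in>{1..\<nu>}. b i * b (i+\<nu>))"
    by (rule sum.cong, simp, rule row_low) auto
  finally show ?thesis by simp
qed

lemma tail1:
  "(\<Sum>i\<in>{2*\<nu>+1..2*\<nu>+1}. \<Sum>j\<in>{1..2*\<nu>+1}. b i * Gmat \<nu> 1 z i j * b j) = b (2*\<nu>+1) * b (2*\<nu>+1)"
proof -
  have "\<And>j. b (2*\<nu>+1) * Gmat \<nu> 1 z (2*\<nu>+1) j * b j = (if j = 2*\<nu>+1 then b (2*\<nu>+1) * b j else 0)"
    by (simp add: Gmat_def)
  then show ?thesis by (simp add: sum.delta')
qed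

lemma tail2:
  "(\<Sum>i\<in>{2*\<nu>+1..2*\<nu>+2}. \<Sum>j\<in>{1..2*\<nu>+2}. b i * Gmat \<nu> 2 z i j * b j)
   = z * b (2*\<nu>+1) * b (2*\<nu>+1) + b (2*\<nu>+1) * b (2*\<nu>+2) + z * b (2*\<nu>+2) * b (2*\<nu>+2)"
proof -
  have U: "{1..2*\<nu>+2} = insert (2*\<nu>+1) (insert (2*\<nu>+2) {1..2*\<nu>})" by auto
  have I: "{2*\<nu>+1..2*\<nu>+2} = {2*\<nu>+1, 2*\<nu>+2}" by auto
  have Z: "\<And>i. i \<in> {2*\<nu>+1, 2*\<nu>+2} \<Longrightarrow> (\<Sum>j\<in>{1..2*\<nu>}. b i * Gmat \<nu> 2 z i j * b j) = 0"
    by (rule sum.neutral) (auto simp: Gmat_def)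
  show ?thesis unfolding U I using Z by (simp add: Gmat_def algebra_simps)
qed


theorem lemma2p1:
  fixes n \<nu> \<delta> :: nat and z :: int and a :: "nat \<Rightarrow> int"
  assumes "n \<ge> 1" and "\<nu> \<ge> 1" and "\<delta> \<in> {0, 1, 2}"
    and "z \<in> units_Z n"
    and "a \<in> Vset n (2*\<nu>+\<delta>)"
    and "cls n (2*\<nu>+\<delta>) a \<in> orth_vertices n \<nu> \<delta> z"
  shows "\<exists>i\<in>{1..2*\<nu>}. a i \<in> units_Z n"
proof (rule ccontr)
  assume H: "\<not> (\<exists>i\<in>{1..2*\<nu>}. a i \<in> units_Z n)"
  define N where "N = 2*\<nu>+\<delta>"
  have p2: "(2::int)^n > 1" using assms(1) by (simp add: one_less_power)
  have e2: "(2::int) dvd 2^n" using assms(1) by (simp add: dvd_power)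
  obtain a' where a': "a' \<in> Vset n N" "bform n \<nu> \<delta> z a' a' = 0" "cls n N a = cls n N a'"
    using assms(6) unfolding orth_vertices_def N_def by blast
  have u1: "(1::int) \<in> units_Z n" using p2 unit_iff_odd[OF assms(1), of 1] unfolding units_Z_def by auto
  have aN: "a \<in> tuples n N" using assms(5) unfolding Vset_def N_def by auto
  have "a = scale n 1 a"
  proof
    fix i show "a i = scale n 1 a i"
      using aN unfolding tuples_def scale_def by (cases "i \<in> {1..N}") auto
  qed
  then have "a \<in> cls n N a" using assms(5) u1 unfolding cls_def N_def by blast
  then have "a \<in> cls n N a'" using a'(3) by simp
  then obtain l where l: "a' = scale n l a" unfolding cls_def by blast
  have ev_a: "even (a i)" if "i \<in> {1..2*\<nu>}" for i
  proof -
    have "a i \<in> {0..<2^n}" using aN that unfolding tuples_def N_def by auto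
    then have "\<not> unit_mod (2^n) (a i)" using H that unfolding units_Z_def by auto
    then show ?thesis using unit_iff_odd[OF assms(1)] by blast
  qed
  have ev_a': "even (a' i)" if "i \<in> {1..2*\<nu>}" for i
  proof -
    have "even (l * a i)" using ev_a[OF that] by simp
    then show ?thesis unfolding l scale_def by (rule dvd_mod[OF _ e2])
  qed
  obtain k where k: "k \<in> {1..N}" "a' k \<in> units_Z n" using a'(1) unfolding Vset_def by blast
  have ok: "odd (a' k)" using k(2) unit_iff_odd[OF assms(1)] unfolding units_Z_def by blast
  have kgt: "k > 2*\<nu>" using ok ev_a' k(1) by (meson atLeastAtMost_iff not_le)
  have oz: "odd z" using assms(4) unit_iff_odd[OF assms(1)] unfolding units_Z_def by blast
  let ?S = "(\<Sum>i\<in>{1..2*\<nu>+\<delta>}. \<Sum>j\<in>{1..2*\<nu>+\<delta>}. a' i * Gmat \<nu> \<delta> z i j * a' j)"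
  let ?T = "(\<Sum>i\<in>{2*\<nu>+1..2*\<nu>+\<delta>}. \<Sum>j\<in>{1..2*\<nu>+\<delta>}. a' i * Gmat \<nu> \<delta> z i j * a' j)"
  have "?S mod 2^n = 0" using a'(2) unfolding bform_def .
  then have "2^n dvd ?S" by (simp add: mod_0_imp_dvd)
  then have "even ?S" using e2 by (rule dvd_trans[rotated])
  moreover have "even (\<Sum>i\<in>{1..\<nu>}. a' i * a' (i+\<nu>))"
    by (rule dvd_sum) (simp add: ev_a')
  ultimately have eT: "even ?T" using total_split[where b=a' and z=z and \<nu>=\<nu> and \<delta>=\<delta>] by simp
  consider "\<delta> = 0" | "\<delta> = 1" | "\<delta> = 2" using assms(3) by blast
  then show False
  proof cases
    case 1 then show ?thesis using kgt k(1) unfolding N_def by simp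
  next
    case 2
    then have "k = 2*\<nu>+1" using kgt k(1) unfolding N_def by simp
    moreover from eT have "even (a' (2*\<nu>+1) * a' (2*\<nu>+1))" unfolding 2 tail1 .
    ultimately show ?thesis using ok by simp
  next
    case 3
    then have "k = 2*\<nu>+1 \<or> k = 2*\<nu>+2" using kgt k(1) unfolding N_def by auto
    moreover from eT have "even (z * a' (2*\<nu>+1) * a' (2*\<nu>+1) + a' (2*\<nu>+1) * a' (2*\<nu>+2) + z * a' (2*\<nu>+2) * a' (2*\<nu>+2))" unfolding 3 tail2 .
    ultimately show ?thesis using ok oz by auto
  qed
qed

end
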